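(* Let $n\ge 1$ and let $U$ be a matchgate unitary on $n$ qubits with associated orthogonal matrix $\mathbf{u}\in \mathbf{SO}(2n)$, i.e. $U^\dagger c_\mu U=\sum_{\nu=1}^{2n}u_{\mu\nu}c_\nu$ for all $\mu\in\{1,\dots,2n\}$. Let $\vec\eta$ and $\vec\alpha$ be Majorana configurations and let $a,b$ be integers such that $A\equiv i^aC_{\vec\eta}$ and $B\equiv i^bC_{\vec\alpha}$ are Hermitian (Pauli observables). Then $$\frac{1}{2^{n+2}}\big\|[A,U^\dagger BU]\big\|^2=\frac12\Big\{1+(-1)^{|\vec\alpha||\vec\eta|+1}\det\big[\mathbf{u}_{\vec\alpha[2n]}(\mathbf{I}-2\mathbf{P}_{\vec\eta})\mathbf{u}^{\mathrm T}_{[2n]\vec\alpha}\big]\Big\},$$ where $\|\cdot\|$ is the Frobenius norm, $\mathbf I$ is the $2n\times 2n$ identity, and $\mathbf{P}_{\vec\eta}$ is the $2n\times 2n$ diagonal matrix with $(\mathbf{P}_{\vec\eta})_{jk}=\delta_{jk}$ if $j,k\in\vec\eta$ and $0$ otherwise (the projector onto the modes $\vec\eta$).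
   Context: On $n$ qubits with Pauli operators $X_k,Y_k,Z_k$, the Majorana operators are $c_{2k-1}=Z_1\cdots Z_{k-1}X_k$ and $c_{2k}=Z_1\cdots Z_{k-1}Y_k$ for $k=1,\dots,n$; they satisfy $c_\mu^2=I$, $c_\mu c_\nu=-c_\nu c_\mu$ for $\mu\ne\nu$. A Majorana configuration is an ordered tuple $\vec\alpha=(\alpha_1,\dots,\alpha_k)$ with $1\le\alpha_1<\alpha_2<\dots<\alpha_k\le 2n$, of degree $|\vec\alpha|=k$; the configuration operator is $C_{\vec\alpha}=c_{\alpha_1}c_{\alpha_2}\cdots c_{\alpha_k}$. $[2n]=(1,2,\dots,2n)$. For a matrix $\mathbf u$ and tuples $\vec\alpha,\vec\beta$, $\mathbf{u}_{\vec\alpha\vec\beta}$ is the submatrix with $(\mathbf{u}_{\vec\alpha\vec\beta})_{jk}=u_{\alpha_j\beta_k}$, and $\mathbf{u}^{\mathrm T}_{\vec\beta\vec\alpha}$ denotes $(\mathbf{u}_{\vec\alpha\vec\beta})^{\mathrm T}$. A matchgate unitary is a unitary $U$ on $n$ qubits (equivalently, a circuit of nearest-neighbour matchgates, i.e. generated by Hamiltonians quadratic in the Majorana operators) for which there is $\mathbf u\in\mathbf{SO}(2n)$ with $U^\dagger c_\mu U=\sum_\nu u_{\mu\nu}c_\nu$. The Frobenius norm is $\|O\|^2=\mathrm{tr}(O^\dagger O)$. *)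

theory Defs
  imports Complex_Main "Jordan_Normal_Form.Determinant"
begin

text \<open>Operators on n qubits are complex (2^n x 2^n) matrices. The computational basis
index r < 2^n encodes qubit k (k = 1..n) in bit (k-1) of r.\<close>

definition qbit :: "nat \<Rightarrow> nat \<Rightarrow> nat" where
  "qbit q r = (r div 2 ^ q) mod 2"

definition pI :: "nat \<Rightarrow> nat \<Rightarrow> complex" where
  "pI r s = (if r = s then 1 else 0)"
definition pX :: "nat \<Rightarrow> nat \<Rightarrow> complex" where
  "pX r s = (if r \<noteq> s then 1 else 0)"
definition pY :: "nat \<Rightarrow> nat \<Rightarrow> complex" where
  "pY r s = (if r = 0 \<and> s = 1 then - \<i> else if r = 1 \<and> s = 0 then \<i> else 0)"
definition pZ :: "nat \<Rightarrow> nat \<Rightarrow> complex" where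
  "pZ r s = (if r = s then (if r = 0 then 1 else -1) else 0)"

text \<open>Tensor product P_1 \<otimes> ... \<otimes> P_n, where P q is the factor on qubit q+1.\<close>
definition pauli_string :: "nat \<Rightarrow> (nat \<Rightarrow> nat \<Rightarrow> nat \<Rightarrow> complex) \<Rightarrow> complex mat" where
  "pauli_string n P = mat (2 ^ n) (2 ^ n) (\<lambda>(r, s). \<Prod>q<n. P q (qbit q r) (qbit q s))"

text \<open>Majorana operators, mu = 1..2n:
  c_(2k-1) = Z_1...Z_(k-1) X_k,  c_(2k) = Z_1...Z_(k-1) Y_k.\<close>
definition majorana :: "nat \<Rightarrow> nat \<Rightarrow> complex mat" where
  "majorana n \<mu> = (let k = (\<mu> + 1) div 2 in
     pauli_string n (\<lambda>q. if q + 1 < k then pZ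
                        else if q + 1 = k then (if odd \<mu> then pX else pY)
                        else pI))"

definition majorana_config :: "nat \<Rightarrow> nat list \<Rightarrow> bool" where
  "majorana_config n \<alpha> \<longleftrightarrow> sorted_wrt (<) \<alpha> \<and> (\<forall>a\<in>set \<alpha>. 1 \<le> a \<and> a \<le> 2 * n)"

definition config_op :: "nat \<Rightarrow> nat list \<Rightarrow> complex mat" where
  "config_op n \<alpha> = foldr (\<lambda>\<mu> M. majorana n \<mu> * M) \<alpha> (1\<^sub>m (2 ^ n))"

definition dagger :: "complex mat \<Rightarrow> complex mat" where
  "dagger A = mat (dim_col A) (dim_row A) (\<lambda>(i, j). cnj (A $$ (j, i)))"

definition mtrace :: "'a::comm_monoid_add mat \<Rightarrow> 'a" where
  "mtrace A = (\<Sum>i<dim_row A. A $$ (i, i))"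

definition frob_norm_sq :: "complex mat \<Rightarrow> complex" where
  "frob_norm_sq M = mtrace (dagger M * M)"

definition commutator :: "complex mat \<Rightarrow> complex mat \<Rightarrow> complex mat" where
  "commutator A B = A * B - B * A"

definition SO_mat :: "nat \<Rightarrow> real mat \<Rightarrow> bool" where
  "SO_mat m u \<longleftrightarrow> u \<in> carrier_mat m m \<and> transpose_mat u * u = 1\<^sub>m m
     \<and> u * transpose_mat u = 1\<^sub>m m \<and> det u = 1"

definition unitary_op :: "nat \<Rightarrow> complex mat \<Rightarrow> bool" where
  "unitary_op n U \<longleftrightarrow> U \<in> carrier_mat (2 ^ n) (2 ^ n) \<and> dagger U * U = 1\<^sub>m (2 ^ n)
     \<and> U * dagger U = 1\<^sub>m (2 ^ n)"

text \<open>U is a matchgate unitary with orthogonal matrix u (entries u_{mu nu}, 1-based mu, nu,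
  stored 0-based): U^dagger c_mu U = sum_nu u_{mu nu} c_nu for all mu.\<close>
definition matchgate_with :: "nat \<Rightarrow> complex mat \<Rightarrow> real mat \<Rightarrow> bool" where
  "matchgate_with n U u \<longleftrightarrow> unitary_op n U \<and> SO_mat (2 * n) u \<and>
     (\<forall>\<mu>\<in>{1..2*n}. dagger U * majorana n \<mu> * U =
        mat (2 ^ n) (2 ^ n) (\<lambda>(r, s). \<Sum>\<nu>\<in>{1..2*n}.
           complex_of_real (u $$ (\<mu> - 1, \<nu> - 1)) * majorana n \<nu> $$ (r, s)))"

text \<open>u_{alpha,[2n]}: rows alpha (1-based labels), all 2n columns.\<close>
definition rows_sub :: "nat \<Rightarrow> real mat \<Rightarrow> nat list \<Rightarrow> real mat" where
  "rows_sub n u \<alpha> = mat (length \<alpha>) (2 * n) (\<lambda>(j, m). u $$ (\<alpha> ! j - 1, m))"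

definition proj_modes :: "nat \<Rightarrow> nat list \<Rightarrow> real mat" where
  "proj_modes n \<eta> = mat (2 * n) (2 * n) (\<lambda>(j, k). if j = k \<and> j + 1 \<in> set \<eta> then 1 else 0)"

end

theory Submission imports Defs begin

definition fac :: "nat \<Rightarrow> nat \<Rightarrow> nat \<Rightarrow> nat \<Rightarrow> complex" where
  "fac \<mu> q = (if q + 1 < (\<mu> + 1) div 2 then pZ
     else if q + 1 = (\<mu> + 1) div 2 then (if odd \<mu> then pX else pY) else pI)"

lemma majorana_fac: "majorana n \<mu> = pauli_string n (fac \<mu>)"
  unfolding majorana_def fac_def Let_def by simp

lemma majorana_carrier[simp]: "majorana n \<mu> \<in> carrier_mat (2^n) (2^n)"
  unfolding majorana_fac pauli_string_def by simp

lemma majorana_dim[simp]: "dim_row (majorana n \<mu>) = 2^n" "dim_col (majorana n \<mu>) = 2^n"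
  unfolding majorana_fac pauli_string_def by simp_all

lemma majorana_entry: "r < 2^n \<Longrightarrow> s < 2^n \<Longrightarrow>
   majorana n \<mu> $$ (r,s) = (\<Prod>q<n. fac \<mu> q (qbit q r) (qbit q s))"
  unfolding majorana_fac pauli_string_def by simp

lemma qbit_bit: "qbit q r = (if bit r q then 1 else 0)"
  unfolding qbit_def by (simp add: bit_iff_odd odd_iff_mod_2_eq_one)

lemma qbit_01: "qbit q r = 0 \<or> qbit q r = 1"
  unfolding qbit_bit by auto

lemma qbit_flip: "qbit q (flip_bit k r) = (if q = k then 1 - qbit q r else qbit q r)"
  unfolding qbit_bit by (auto simp: bit_flip_bit_iff)

lemma flip_lt: "k < n \<Longrightarrow> (r::nat) < 2^n \<Longrightarrow> flip_bit k r < 2^n"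
  by (metis take_bit_flip_bit_eq take_bit_nat_eq_self_iff not_le)

lemma eq_bits: assumes "(r::nat) < 2^n" "s < 2^n" "\<forall>q<n. qbit q r = qbit q s"
  shows "r = s"
proof (rule bit_eqI)
  fix q
  show "bit r q = bit s q"
  proof (cases "q < n")
    case True then show ?thesis using assms(3) unfolding qbit_bit by (metis one_neq_zero)
  next
    case False
    have "take_bit n r = r" "take_bit n s = s" using assms by (auto simp: take_bit_nat_eq_self_iff)
    then show ?thesis using False by (metis bit_take_bit_iff)
  qed
qed

lemma flip_flip: "flip_bit k (flip_bit k (r::nat)) = r"
  by (rule bit_eqI) (auto simp: bit_flip_bit_iff)

lemma flip_comm: "flip_bit k (flip_bit j (r::nat)) = flip_bit j (flip_bit k r)"
  by (rule bit_eqI) (auto simp: bit_flip_bit_iff)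

definition kk :: "nat \<Rightarrow> nat" where "kk \<mu> = (\<mu> + 1) div 2 - 1"

abbreviation fl :: "nat \<Rightarrow> nat \<Rightarrow> nat" where "fl \<mu> r \<equiv> flip_bit (kk \<mu>) r"

lemma kk_lt: "1 \<le> \<mu> \<Longrightarrow> \<mu> \<le> 2*n \<Longrightarrow> kk \<mu> < n"
  unfolding kk_def by auto

lemma fac_kk: "1 \<le> \<mu> \<Longrightarrow> fac \<mu> q =
   (if q < kk \<mu> then pZ else if q = kk \<mu> then (if odd \<mu> then pX else pY) else pI)"
proof -
  assume "1 \<le> \<mu>"
  then have "(\<mu> + 1) div 2 = kk \<mu> + 1" unfolding kk_def by auto
  then show ?thesis unfolding fac_def by simp
qed

lemma fac_zero:
  assumes "1 \<le> \<mu>" "x \<in> {0,1}" "y \<in> {0,1}" "if q = kk \<mu> then y \<noteq> 1 - x else y \<noteq> x"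
  shows "fac \<mu> q x y = 0"
  using assms unfolding fac_kk[OF assms(1)] pX_def pY_def pZ_def pI_def
  by (auto split: if_splits)

lemma qbit_in: "qbit q r \<in> {0,1}" using qbit_01 by auto

lemma majorana_zero:
  assumes "1 \<le> \<mu>" "\<mu> \<le> 2*n" "r < 2^n" "s < 2^n" "s \<noteq> fl \<mu> r"
  shows "majorana n \<mu> $$ (r,s) = 0"
proof -
  have "\<exists>q<n. qbit q s \<noteq> qbit q (fl \<mu> r)"
    using eq_bits[of s n "fl \<mu> r"] assms flip_lt[OF kk_lt[OF assms(1,2)] assms(3)] by auto
  then obtain q where q: "q < n" "qbit q s \<noteq> qbit q (fl \<mu> r)" by auto
  have "fac \<mu> q (qbit q r) (qbit q s) = 0"
    apply (rule fac_zero[OF assms(1) qbit_in qbit_in])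
    using q(2) unfolding qbit_flip by (auto split: if_splits)
  then show ?thesis unfolding majorana_entry[OF assms(3,4)] using q(1)
    by (metis finite_lessThan lessThan_iff prod_zero_iff)
qed

lemma mult_collapse:
  fixes A M :: "complex mat"
  assumes "A \<in> carrier_mat N N" "M \<in> carrier_mat N N" "r < N" "s < N" "t0 < N"
    "\<And>t. t < N \<Longrightarrow> t \<noteq> t0 \<Longrightarrow> A $$ (r,t) = 0"
  shows "(A * M) $$ (r,s) = A $$ (r,t0) * M $$ (t0,s)"
proof -
  have "(A * M) $$ (r,s) = (\<Sum>t\<in>{0..<N}. A $$ (r,t) * M $$ (t,s))"
    using assms by (simp add: scalar_prod_def)
  also have "\<dots> = (\<Sum>t\<in>{0..<N}. if t = t0 then A $$ (r,t0) * M $$ (t0,s) else 0)"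
    by (rule sum.cong) (use assms in auto)
  also have "\<dots> = A $$ (r,t0) * M $$ (t0,s)" using assms by simp
  finally show ?thesis .
qed

lemma majorana_mult_entry:
  assumes "1 \<le> \<mu>" "\<mu> \<le> 2*n" "r < 2^n" "s < 2^n" "M \<in> carrier_mat (2^n) (2^n)"
  shows "(majorana n \<mu> * M) $$ (r,s) = majorana n \<mu> $$ (r, fl \<mu> r) * M $$ (fl \<mu> r, s)"
  by (rule mult_collapse[OF majorana_carrier assms(5) assms(3,4)])
     (auto intro: flip_lt kk_lt assms majorana_zero)

lemma fac_sq:
  assumes "1 \<le> \<mu>" "x \<in> {0,1}"
  shows "fac \<mu> q x (if q = kk \<mu> then 1 - x else x) * fac \<mu> q (if q = kk \<mu> then 1 - x else x) x = 1"
  using assms unfolding fac_kk[OF assms(1)] pX_def pY_def pZ_def pI_def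
  by (auto split: if_splits)

lemma majorana_sq:
  assumes "1 \<le> \<mu>" "\<mu> \<le> 2*n"
  shows "majorana n \<mu> * majorana n \<mu> = 1\<^sub>m (2^n)"
proof (rule eq_matI)
  fix r s assume rs: "r < dim_row (1\<^sub>m (2^n) :: complex mat)" "s < dim_col (1\<^sub>m (2^n) :: complex mat)"
  then have r: "r < 2^n" and s: "s < 2^n" by auto
  have fr: "fl \<mu> r < 2^n" by (rule flip_lt[OF kk_lt[OF assms] r])
  show "(majorana n \<mu> * majorana n \<mu>) $$ (r,s) = 1\<^sub>m (2^n) $$ (r,s)"
  proof (cases "s = r")
    case True
    have "(majorana n \<mu> * majorana n \<mu>) $$ (r,r) =
      (\<Prod>q<n. fac \<mu> q (qbit q r) (qbit q (fl \<mu> r)) * fac \<mu> q (qbit q (fl \<mu> r)) (qbit q r))"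
      unfolding majorana_mult_entry[OF assms r r majorana_carrier]
        majorana_entry[OF r fr] majorana_entry[OF fr r] prod.distrib ..
    also have "\<dots> = 1" by (rule prod.neutral) (simp add: qbit_flip fac_sq[OF assms(1) qbit_in])
    finally show ?thesis using True r by simp
  next
    case False
    then have "s \<noteq> fl \<mu> (fl \<mu> r)" by (simp add: flip_flip)
    then show ?thesis using False r s
      by (simp add: majorana_mult_entry[OF assms r s majorana_carrier] majorana_zero[OF assms fr s])
  qed
qed auto

lemma kk_same: "1 \<le> \<mu> \<Longrightarrow> 1 \<le> \<nu> \<Longrightarrow> \<mu> \<noteq> \<nu> \<Longrightarrow> kk \<mu> = kk \<nu> \<Longrightarrow> odd \<mu> \<longleftrightarrow> even \<nu>"
  unfolding kk_def by presburger

lemma fac_anti: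
  assumes "1 \<le> \<mu>" "1 \<le> \<nu>" "\<mu> \<noteq> \<nu>" "x \<in> {0,1}"
  shows "fac \<mu> q x (if q = kk \<mu> then 1 - x else x) *
         fac \<nu> q (if q = kk \<mu> then 1 - x else x) (if q = kk \<nu> then 1 - (if q = kk \<mu> then 1 - x else x) else (if q = kk \<mu> then 1 - x else x))
    = (if q = min (kk \<mu>) (kk \<nu>) then -1 else 1) *
      (fac \<nu> q x (if q = kk \<nu> then 1 - x else x) *
       fac \<mu> q (if q = kk \<nu> then 1 - x else x) (if q = kk \<mu> then 1 - (if q = kk \<nu> then 1 - x else x) else (if q = kk \<nu> then 1 - x else x)))"
  using assms kk_same[OF assms(1-3)] unfolding fac_kk[OF assms(1)] fac_kk[OF assms(2)] pX_def pY_def pZ_def pI_def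
  by (auto split: if_splits)

lemma majorana_anti:
  assumes "1 \<le> \<mu>" "\<mu> \<le> 2*n" "1 \<le> \<nu>" "\<nu> \<le> 2*n" "\<mu> \<noteq> \<nu>"
  shows "majorana n \<mu> * majorana n \<nu> = - (majorana n \<nu> * majorana n \<mu>)"
proof (rule eq_matI)
  fix r s assume rs: "r < dim_row (- (majorana n \<nu> * majorana n \<mu>))" "s < dim_col (- (majorana n \<nu> * majorana n \<mu>))"
  then have r: "r < 2^n" and s: "s < 2^n" by auto
  have fr: "fl \<mu> r < 2^n" by (rule flip_lt[OF kk_lt[OF assms(1,2)] r])
  have gr: "fl \<nu> r < 2^n" by (rule flip_lt[OF kk_lt[OF assms(3,4)] r])
  have e1: "(majorana n \<mu> * majorana n \<nu>) $$ (r,s) = majorana n \<mu> $$ (r, fl \<mu> r) * majorana n \<nu> $$ (fl \<mu> r, s)"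
    by (rule majorana_mult_entry[OF assms(1,2) r s majorana_carrier])
  have e2: "(majorana n \<nu> * majorana n \<mu>) $$ (r,s) = majorana n \<nu> $$ (r, fl \<nu> r) * majorana n \<mu> $$ (fl \<nu> r, s)"
    by (rule majorana_mult_entry[OF assms(3,4) r s majorana_carrier])
  show "(majorana n \<mu> * majorana n \<nu>) $$ (r,s) = (- (majorana n \<nu> * majorana n \<mu>)) $$ (r,s)"
  proof (cases "s = fl \<nu> (fl \<mu> r)")
    case True
    define s' where "s' = fl \<nu> (fl \<mu> r)"
    have s': "s' < 2^n" using True s s'_def by simp
    have e1: "(majorana n \<mu> * majorana n \<nu>) $$ (r,s') = majorana n \<mu> $$ (r, fl \<mu> r) * majorana n \<nu> $$ (fl \<mu> r, s')"
      by (rule majorana_mult_entry[OF assms(1,2) r s' majorana_carrier])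
    have e2: "(majorana n \<nu> * majorana n \<mu>) $$ (r,s') = majorana n \<nu> $$ (r, fl \<nu> r) * majorana n \<mu> $$ (fl \<nu> r, s')"
      by (rule majorana_mult_entry[OF assms(3,4) r s' majorana_carrier])
    have s'2: "s' = fl \<mu> (fl \<nu> r)" unfolding s'_def by (rule flip_comm)
    have q0: "min (kk \<mu>) (kk \<nu>) \<in> {..<n}" using kk_lt[OF assms(1,2)] by auto
    have "(majorana n \<mu> * majorana n \<nu>) $$ (r,s') =
       (\<Prod>q<n. (if q = min (kk \<mu>) (kk \<nu>) then -1 else 1) *
      (fac \<nu> q (qbit q r) (qbit q (fl \<nu> r)) * fac \<mu> q (qbit q (fl \<nu> r)) (qbit q (fl \<mu> (fl \<nu> r)))))"
      unfolding e1 majorana_entry[OF r fr] majorana_entry[OF fr s'] prod.distrib[symmetric]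
      unfolding s'_def
      apply (rule prod.cong[OF refl]) unfolding qbit_flip by (rule fac_anti[OF assms(1,3,5) qbit_in])
    also have "\<dots> = - ((majorana n \<nu> * majorana n \<mu>) $$ (r,s'))"
      unfolding e2 majorana_entry[OF r gr] majorana_entry[OF gr s'] unfolding s'2
      using q0 by (simp add: prod.distrib)
    finally show ?thesis using r s' True s'_def by simp
  next
    case False
    then have "s \<noteq> fl \<mu> (fl \<nu> r)" by (simp add: flip_comm)
    then show ?thesis using False r s e1 e2 majorana_zero[OF assms(1,2) gr s] majorana_zero[OF assms(3,4) fr s] by simp
  qed
qed auto

lemma fac_herm: "x \<in> {0,1} \<Longrightarrow> y \<in> {0,1} \<Longrightarrow> cnj (fac \<mu> q y x) = fac \<mu> q x y"
  unfolding fac_def pX_def pY_def pZ_def pI_def by (auto split: if_splits)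

lemma majorana_herm: "dagger (majorana n \<mu>) = majorana n \<mu>"
proof (rule eq_matI)
  fix r s assume "r < dim_row (majorana n \<mu>)" "s < dim_col (majorana n \<mu>)"
  then have r: "r < 2^n" and s: "s < 2^n" by auto
  show "dagger (majorana n \<mu>) $$ (r,s) = majorana n \<mu> $$ (r,s)"
    using r s by (simp add: dagger_def majorana_entry cnj_prod fac_herm[OF qbit_in qbit_in])
qed (auto simp: dagger_def)

section \<open>dagger and trace\<close>

lemma dagger_dim[simp]: "dim_row (dagger A) = dim_col A" "dim_col (dagger A) = dim_row A"
  unfolding dagger_def by auto

lemma dagger_carrier[simp]: "A \<in> carrier_mat n m \<Longrightarrow> dagger A \<in> carrier_mat m n"
  unfolding dagger_def by auto

lemma dagger_index[simp]: "i < dim_col A \<Longrightarrow> j < dim_row A \<Longrightarrow> dagger A $$ (i,j) = cnj (A $$ (j,i))"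
  unfolding dagger_def by auto

lemma dagger_dagger[simp]: "dagger (dagger A) = A"
  by (rule eq_matI) auto

lemma dagger_mult: assumes "A \<in> carrier_mat n m" "B \<in> carrier_mat m p"
  shows "dagger (A * B) = dagger B * dagger A"
proof (rule eq_matI)
  fix i j assume "i < dim_row (dagger B * dagger A)" "j < dim_col (dagger B * dagger A)"
  then have ij: "i < p" "j < n" using assms by auto
  show "dagger (A * B) $$ (i, j) = (dagger B * dagger A) $$ (i, j)"
    using assms ij by (simp add: scalar_prod_def mult.commute)
qed (use assms in auto)

lemma dagger_smult[simp]: "dagger (k \<cdot>\<^sub>m A) = cnj k \<cdot>\<^sub>m dagger A"
  by (rule eq_matI) auto

lemma dagger_minus: assumes "A \<in> carrier_mat n m" "B \<in> carrier_mat n m"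
  shows "dagger (A - B) = dagger A - dagger B"
  by (rule eq_matI) (use assms in auto)

lemma dagger_one[simp]: "dagger (1\<^sub>m N) = 1\<^sub>m N"
  by (rule eq_matI) auto

lemma mtrace_comm: fixes A B :: "complex mat" assumes "A \<in> carrier_mat n m" "B \<in> carrier_mat m n"
  shows "mtrace (A * B) = mtrace (B * A)"
proof -
  have "mtrace (A * B) = (\<Sum>i<n. \<Sum>k<m. A $$ (i,k) * B $$ (k,i))"
    unfolding mtrace_def using assms by (simp add: scalar_prod_def atLeast0LessThan)
  also have "\<dots> = (\<Sum>k<m. \<Sum>i<n. B $$ (k,i) * A $$ (i,k))"
    apply (subst sum.swap) apply (intro sum.cong refl) by (rule mult.commute)
  also have "\<dots> = mtrace (B * A)"
    unfolding mtrace_def using assms by (simp add: scalar_prod_def atLeast0LessThan)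
  finally show ?thesis .
qed

lemma mtrace_add: fixes A B :: "complex mat" assumes "A \<in> carrier_mat n n" "B \<in> carrier_mat n n"
  shows "mtrace (A + B) = mtrace A + mtrace B"
  unfolding mtrace_def using assms by (simp add: sum.distrib)

lemma mtrace_minus: fixes A B :: "complex mat" assumes "A \<in> carrier_mat n n" "B \<in> carrier_mat n n"
  shows "mtrace (A - B) = mtrace A - mtrace B"
  unfolding mtrace_def using assms by (simp add: sum_subtractf[symmetric])

lemma mtrace_smult: "(A::complex mat) \<in> carrier_mat N N \<Longrightarrow> mtrace (k \<cdot>\<^sub>m A) = k * mtrace A"
  unfolding mtrace_def by (auto simp: sum_distrib_left intro: sum.cong)


lemma mtrace_one: "mtrace (1\<^sub>m N :: complex mat) = of_nat N"
  unfolding mtrace_def by simp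

section \<open>linear combinations\<close>

definition linF :: "nat \<Rightarrow> (nat \<Rightarrow> complex mat) \<Rightarrow> (nat \<Rightarrow> complex) \<Rightarrow> complex mat" where
  "linF n C f = mat (2^n) (2^n) (\<lambda>(r,s). \<Sum>\<nu>\<in>{1..2*n}. f \<nu> * C \<nu> $$ (r,s))"

definition lin :: "nat \<Rightarrow> (nat \<Rightarrow> real) \<Rightarrow> complex mat" where
  "lin n x = mat (2 ^ n) (2 ^ n) (\<lambda>(r, s). \<Sum>\<nu>\<in>{1..2*n}.
           complex_of_real (x \<nu>) * majorana n \<nu> $$ (r, s))"

definition ip :: "nat \<Rightarrow> (nat \<Rightarrow> real) \<Rightarrow> (nat \<Rightarrow> real) \<Rightarrow> real" where
  "ip n x y = (\<Sum>\<nu>\<in>{1..2*n}. x \<nu> * y \<nu>)"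

lemma lin_linF: "lin n x = linF n (majorana n) (\<lambda>\<nu>. complex_of_real (x \<nu>))"
  unfolding lin_def linF_def ..

lemma linF_carrier[simp]: "linF n C f \<in> carrier_mat (2^n) (2^n)"
  unfolding linF_def by simp

lemma lin_carrier[simp]: "lin n x \<in> carrier_mat (2^n) (2^n)"
  unfolding lin_def by simp

lemma lin_dim[simp]: "dim_row (lin n x) = 2^n" "dim_col (lin n x) = 2^n"
  unfolding lin_def by simp_all

lemma linF_mult_right:
  assumes "M \<in> carrier_mat (2^n) (2^n)" "\<And>\<nu>. C \<nu> \<in> carrier_mat (2^n) (2^n)"
  shows "linF n C f * M = linF n (\<lambda>\<nu>. C \<nu> * M) f"
proof (rule eq_matI)
  fix r s assume "r < dim_row (linF n (\<lambda>\<nu>. C \<nu> * M) f)" "s < dim_col (linF n (\<lambda>\<nu>. C \<nu> * M) f)"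
  then have rs: "r < 2^n" "s < 2^n" unfolding linF_def by auto
  have dC: "\<And>\<nu>. dim_row (C \<nu>) = 2^n" "\<And>\<nu>. dim_col (C \<nu>) = 2^n" using assms(2) by auto
  have "(linF n C f * M) $$ (r,s) = (\<Sum>t\<in>{0..<2^n}. (\<Sum>\<nu>\<in>{1..2*n}. f \<nu> * C \<nu> $$ (r,t)) * M $$ (t,s))"
    using assms rs by (simp add: linF_def scalar_prod_def)
  also have "\<dots> = (\<Sum>\<nu>\<in>{1..2*n}. f \<nu> * (\<Sum>t\<in>{0..<2^n}. C \<nu> $$ (r,t) * M $$ (t,s)))"
    by (simp add: sum_distrib_right sum_distrib_left mult.assoc sum.swap[of _ "{0..<2^n}"])
  also have "\<dots> = linF n (\<lambda>\<nu>. C \<nu> * M) f $$ (r,s)"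
    using assms rs dC by (simp add: linF_def scalar_prod_def)
  finally show "(linF n C f * M) $$ (r,s) = linF n (\<lambda>\<nu>. C \<nu> * M) f $$ (r,s)" .
qed (use assms in \<open>auto simp: linF_def\<close>)

lemma linF_mult_left:
  assumes "M \<in> carrier_mat (2^n) (2^n)" "\<And>\<nu>. C \<nu> \<in> carrier_mat (2^n) (2^n)"
  shows "M * linF n C f = linF n (\<lambda>\<nu>. M * C \<nu>) f"
proof (rule eq_matI)
  fix r s assume "r < dim_row (linF n (\<lambda>\<nu>. M * C \<nu>) f)" "s < dim_col (linF n (\<lambda>\<nu>. M * C \<nu>) f)"
  then have rs: "r < 2^n" "s < 2^n" unfolding linF_def by auto
  have dC: "\<And>\<nu>. dim_row (C \<nu>) = 2^n" "\<And>\<nu>. dim_col (C \<nu>) = 2^n" using assms(2) by auto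
  have "(M * linF n C f) $$ (r,s) = (\<Sum>t\<in>{0..<2^n}. M $$ (r,t) * (\<Sum>\<nu>\<in>{1..2*n}. f \<nu> * C \<nu> $$ (t,s)))"
    using assms rs by (simp add: linF_def scalar_prod_def)
  also have "\<dots> = (\<Sum>\<nu>\<in>{1..2*n}. f \<nu> * (\<Sum>t\<in>{0..<2^n}. M $$ (r,t) * C \<nu> $$ (t,s)))"
    by (simp add: sum_distrib_right sum_distrib_left mult.assoc mult.left_commute sum.swap[of _ "{0..<2^n}"])
  also have "\<dots> = linF n (\<lambda>\<nu>. M * C \<nu>) f $$ (r,s)"
    using assms rs dC by (simp add: linF_def scalar_prod_def)
  finally show "(M * linF n C f) $$ (r,s) = linF n (\<lambda>\<nu>. M * C \<nu>) f $$ (r,s)" .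
qed (use assms in \<open>auto simp: linF_def\<close>)

lemma cc_entry:
  assumes "\<mu> \<in> {1..2*n}" "\<nu> \<in> {1..2*n}" "r < 2^n" "s < 2^n"
  shows "(majorana n \<mu> * majorana n \<nu>) $$ (r,s) + (majorana n \<nu> * majorana n \<mu>) $$ (r,s)
    = (if \<mu> = \<nu> then 2 * 1\<^sub>m (2^n) $$ (r,s) else 0)"
proof (cases "\<mu> = \<nu>")
  case True then show ?thesis using assms majorana_sq[of \<mu> n] by simp
next
  case False then show ?thesis using assms majorana_anti[of \<mu> n \<nu>] by simp
qed

lemma lin_anti: "lin n x * lin n y + lin n y * lin n x = complex_of_real (2 * ip n x y) \<cdot>\<^sub>m 1\<^sub>m (2^n)"
proof -
  let ?c = "majorana n"
  have m: "\<And>a b. lin n a * lin n b = linF n (\<lambda>\<mu>. linF n (\<lambda>\<nu>. ?c \<mu> * ?c \<nu>) (\<lambda>\<nu>. complex_of_real (b \<nu>))) (\<lambda>\<mu>. complex_of_real (a \<mu>))"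
    unfolding lin_linF by (subst linF_mult_right) (auto simp: linF_mult_left)
  show ?thesis
  proof (rule eq_matI)
    fix r s assume "r < dim_row (complex_of_real (2 * ip n x y) \<cdot>\<^sub>m 1\<^sub>m (2^n))"
      "s < dim_col (complex_of_real (2 * ip n x y) \<cdot>\<^sub>m 1\<^sub>m (2^n) :: complex mat)"
    then have rs: "r < 2^n" "s < 2^n" by auto
    have "(lin n x * lin n y + lin n y * lin n x) $$ (r,s) =
      (\<Sum>\<mu>\<in>{1..2*n}. \<Sum>\<nu>\<in>{1..2*n}. complex_of_real (x \<mu>) * complex_of_real (y \<nu>) * (?c \<mu> * ?c \<nu>) $$ (r,s))
    + (\<Sum>\<mu>\<in>{1..2*n}. \<Sum>\<nu>\<in>{1..2*n}. complex_of_real (y \<mu>) * complex_of_real (x \<nu>) * (?c \<mu> * ?c \<nu>) $$ (r,s))"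
      unfolding m using rs by (simp add: linF_def sum_distrib_left mult.assoc)
    also have "\<dots> = (\<Sum>\<mu>\<in>{1..2*n}. \<Sum>\<nu>\<in>{1..2*n}. complex_of_real (x \<mu>) * complex_of_real (y \<nu>) *
        ((?c \<mu> * ?c \<nu>) $$ (r,s) + (?c \<nu> * ?c \<mu>) $$ (r,s)))"
      by (subst (2) sum.swap) (simp add: sum.distrib[symmetric] algebra_simps)
    also have "\<dots> = (\<Sum>\<mu>\<in>{1..2*n}. \<Sum>\<nu>\<in>{1..2*n}. if \<mu> = \<nu> then complex_of_real (x \<mu>) * complex_of_real (y \<nu>) * (2 * 1\<^sub>m (2^n) $$ (r,s)) else 0)"
      apply (intro sum.cong refl) apply (subst cc_entry) using rs by auto
    also have "\<dots> = (\<Sum>\<mu>\<in>{1..2*n}. complex_of_real (x \<mu>) * complex_of_real (y \<mu>) * (2 * 1\<^sub>m (2^n) $$ (r,s)))"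
      by (simp add: sum.delta)
    also have "\<dots> = (complex_of_real (2 * ip n x y) \<cdot>\<^sub>m 1\<^sub>m (2^n)) $$ (r,s)"
      using rs by (simp add: ip_def sum_distrib_right sum_distrib_left algebra_simps)
    finally show "(lin n x * lin n y + lin n y * lin n x) $$ (r,s) = (complex_of_real (2 * ip n x y) \<cdot>\<^sub>m 1\<^sub>m (2^n)) $$ (r,s)" .
  qed auto
qed

lemma lin_herm: "dagger (lin n x) = lin n x"
proof (rule eq_matI)
  fix r s assume "r < dim_row (lin n x)" "s < dim_col (lin n x)"
  then have rs: "r < 2^n" "s < 2^n" by auto
  have "\<And>\<nu>. cnj (majorana n \<nu> $$ (s, r)) = majorana n \<nu> $$ (r,s)"
    using majorana_herm[of n] rs by (metis dagger_index majorana_dim)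
  then show "dagger (lin n x) $$ (r,s) = lin n x $$ (r,s)" using rs by (simp add: lin_def)
qed auto

section \<open>products\<close>

definition prodL :: "nat \<Rightarrow> (nat \<Rightarrow> real) list \<Rightarrow> complex mat" where
  "prodL n xs = foldr (\<lambda>x M. lin n x * M) xs (1\<^sub>m (2^n))"

lemma prodL_Nil[simp]: "prodL n [] = 1\<^sub>m (2^n)" unfolding prodL_def by simp
lemma prodL_Cons[simp]: "prodL n (x # xs) = lin n x * prodL n xs" unfolding prodL_def by simp

lemma prodL_carrier[simp]: "prodL n xs \<in> carrier_mat (2^n) (2^n)"
  by (induction xs) auto

lemma prodL_dim[simp]: "dim_row (prodL n xs) = 2^n" "dim_col (prodL n xs) = 2^n"
  using prodL_carrier[of n xs, THEN carrier_matD(1)] prodL_carrier[of n xs, THEN carrier_matD(2)] by auto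

lemma smult_mult_dim[simp]: "dim_col A = dim_row B \<Longrightarrow> (k \<cdot>\<^sub>m A) * B = (k::complex) \<cdot>\<^sub>m (A * B)"
  by (rule mult_smult_assoc_mat[of A "dim_row A" "dim_col A" B "dim_col B"]) auto

lemma mult_smult_dim[simp]: "dim_col A = dim_row B \<Longrightarrow> A * (k \<cdot>\<^sub>m B) = (k::complex) \<cdot>\<^sub>m (A * B)"
  by (rule mult_smult_distrib[of A "dim_row A" "dim_col A" B "dim_col B"]) auto

lemma smult_smult_mat'[simp]: "a \<cdot>\<^sub>m (b \<cdot>\<^sub>m A) = (a * b :: 'a::semigroup_mult) \<cdot>\<^sub>m A"
  by (rule eq_matI) (auto simp: mult.assoc)

lemma smult_one_mat'[simp]: "(1::'a::monoid_mult) \<cdot>\<^sub>m A = A"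
  by (rule eq_matI) auto

lemma mult_minus_dim: "dim_col A = dim_row B \<Longrightarrow> dim_row C = dim_row B \<Longrightarrow> dim_col C = dim_col B \<Longrightarrow>
   A * (B - C) = A * B - A * (C::complex mat)"
  by (rule mult_minus_distrib_mat[of A "dim_row A" "dim_col A" B "dim_col B"]) auto

lemma minus_mult_dim: "dim_col A = dim_row C \<Longrightarrow> dim_row B = dim_row A \<Longrightarrow> dim_col B = dim_col A \<Longrightarrow>
   (A - B) * C = A * C - B * (C::complex mat)"
  by (rule minus_mult_distrib_mat[of A "dim_row A" "dim_col A" B C "dim_col C"]) auto

lemma mtrace_minus_dim: "dim_row A = dim_col A \<Longrightarrow> dim_row B = dim_row A \<Longrightarrow> dim_col B = dim_col A \<Longrightarrow>
   mtrace (A - B) = mtrace A - mtrace (B::complex mat)"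
  by (rule mtrace_minus[of _ "dim_row A"]) auto

lemma mtrace_smult_dim: "dim_row A = dim_col A \<Longrightarrow> mtrace (k \<cdot>\<^sub>m (A::complex mat)) = k * mtrace A"
  by (rule mtrace_smult[of _ "dim_row A"]) auto

lemma mtrace_comm_dim: "dim_col A = dim_row B \<Longrightarrow> dim_col B = dim_row A \<Longrightarrow> mtrace (A * B) = mtrace (B * (A::complex mat))"
  by (rule mtrace_comm[of _ "dim_row A" "dim_col A"]) auto

lemma assoc_dim[simp]: "dim_col A = dim_row B \<Longrightarrow> dim_col B = dim_row C \<Longrightarrow> (A * B) * (C :: 'a::semiring_0 mat) = A * (B * C)"
  by (rule assoc_mult_mat[of A "dim_row A" "dim_col A" B "dim_col B" C "dim_col C"]) auto

lemma prodL_append: "prodL n (xs @ ys) = prodL n xs * prodL n ys"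
  by (induction xs) (auto simp: prodL_carrier)

lemma prodL_snoc: "prodL n (xs @ [y]) = prodL n xs * lin n y"
  unfolding prodL_append by simp

lemma lin_anti': "lin n x * lin n y = complex_of_real (2 * ip n x y) \<cdot>\<^sub>m 1\<^sub>m (2^n) - lin n y * lin n x"
proof (rule eq_matI)
  fix r s assume "r < dim_row (complex_of_real (2 * ip n x y) \<cdot>\<^sub>m 1\<^sub>m (2^n) - lin n y * lin n x)"
     "s < dim_col (complex_of_real (2 * ip n x y) \<cdot>\<^sub>m 1\<^sub>m (2^n) - lin n y * lin n x)"
  then have rs: "r < 2^n" "s < 2^n" by auto
  have "(lin n x * lin n y + lin n y * lin n x) $$ (r,s) = (complex_of_real (2 * ip n x y) \<cdot>\<^sub>m 1\<^sub>m (2^n)) $$ (r,s)"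
    by (simp only: lin_anti)
  then show "(lin n x * lin n y) $$ (r,s) = (complex_of_real (2 * ip n x y) \<cdot>\<^sub>m 1\<^sub>m (2^n) - lin n y * lin n x) $$ (r,s)"
    using rs by (simp add: algebra_simps)
qed auto

lemma lin_orth: "ip n x y = 0 \<Longrightarrow> lin n x * lin n y = (-1) \<cdot>\<^sub>m (lin n y * lin n x)"
  by (rule eq_matI) (auto simp: lin_anti'[of n x y])

lemma lin_prodL_orth:
  "(\<forall>y\<in>set ys. ip n x y = 0) \<Longrightarrow> lin n x * prodL n ys = (-1) ^ length ys \<cdot>\<^sub>m (prodL n ys * lin n x)"
proof (induction ys)
  case Nil then show ?case by (auto intro!: eq_matI)
next
  case (Cons y ys)
  have "lin n x * prodL n (y # ys) = (lin n x * lin n y) * prodL n ys" by simp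
  also have "\<dots> = (-1) \<cdot>\<^sub>m (lin n y * (lin n x * prodL n ys))"
    using Cons.prems by (simp add: lin_orth)
  also have "\<dots> = (-1) ^ length (y#ys) \<cdot>\<^sub>m (prodL n (y # ys) * lin n x)"
    using Cons by simp
  finally show ?case .
qed

definition delj :: "nat \<Rightarrow> 'a list \<Rightarrow> 'a list" where
  "delj j xs = take j xs @ drop (Suc j) xs"

lemma delj_0[simp]: "delj 0 (x # xs) = xs" unfolding delj_def by simp
lemma delj_Suc[simp]: "delj (Suc j) (x # xs) = x # delj j xs" unfolding delj_def by simp
lemma length_delj[simp]: "j < length xs \<Longrightarrow> length (delj j xs) = length xs - 1"
  unfolding delj_def by simp
lemma nth_delj: "j < length xs \<Longrightarrow> i < length xs - 1 \<Longrightarrow>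
   delj j xs ! i = (if i < j then xs ! i else xs ! Suc i)"
  unfolding delj_def by (auto simp: nth_append min_def)

lemma trace_move:
  "\<And>M. M \<in> carrier_mat (2^n) (2^n) \<Longrightarrow>
   mtrace (M * (prodL n (rev ds) * lin n e)) =
     (-1) ^ length ds * mtrace (M * (lin n e * prodL n (rev ds))) +
     (\<Sum>j<length ds. (-1) ^ j * complex_of_real (2 * ip n (ds ! j) e) * mtrace (M * prodL n (rev (delj j ds))))"
proof (induction ds)
  case Nil then show ?case by simp
next
  case (Cons d ds)
  let ?Q = "prodL n (rev ds)"
  let ?c = "complex_of_real (2 * ip n d e)"
  have M: "M \<in> carrier_mat (2^n) (2^n)" by fact
  then have Md[simp]: "dim_row M = 2^n" "dim_col M = 2^n" by auto
  have s1: "mtrace (M * (prodL n (rev (d # ds)) * lin n e)) = ?c * mtrace (M * ?Q) - mtrace ((M * (?Q * lin n e)) * lin n d)"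
  proof -
    have "mtrace (M * (prodL n (rev (d # ds)) * lin n e)) = mtrace (M * (?Q * (lin n d * lin n e)))"
      using M by (simp add: prodL_snoc)
    also have "\<dots> = mtrace (?c \<cdot>\<^sub>m (M * ?Q) - M * (?Q * (lin n e * lin n d)))"
      unfolding lin_anti'[of n d e] using M
      by (simp add: mult_minus_dim)
    also have "\<dots> = ?c * mtrace (M * ?Q) - mtrace ((M * (?Q * lin n e)) * lin n d)"
      using M by (simp add: mtrace_minus_dim mtrace_smult_dim)
    finally show ?thesis .
  qed
  have sh: "\<And>j. mtrace ((lin n d * M) * prodL n (rev (delj j ds))) = mtrace (M * prodL n (rev (delj (Suc j) (d # ds))))"
    using M by (simp add: mtrace_comm_dim[of "lin n d"] prodL_snoc)
  have s2: "mtrace ((M * (?Q * lin n e)) * lin n d) = (-1) ^ length ds * mtrace (M * (lin n e * prodL n (rev (d # ds)))) +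
     (\<Sum>j<length ds. (-1) ^ j * complex_of_real (2 * ip n (ds ! j) e) * mtrace (M * prodL n (rev (delj (Suc j) (d # ds)))))"
  proof -
    have "mtrace ((M * (?Q * lin n e)) * lin n d) = mtrace ((lin n d * M) * (?Q * lin n e))"
      using M mtrace_comm_dim[of "M * (?Q * lin n e)" "lin n d"] by simp
    also have "\<dots> = (-1) ^ length ds * mtrace ((lin n d * M) * (lin n e * ?Q)) +
       (\<Sum>j<length ds. (-1) ^ j * complex_of_real (2 * ip n (ds ! j) e) * mtrace ((lin n d * M) * prodL n (rev (delj j ds))))"
      by (rule Cons.IH[OF mult_carrier_mat[OF lin_carrier M]])
    also have "mtrace ((lin n d * M) * (lin n e * ?Q)) = mtrace (M * (lin n e * prodL n (rev (d # ds))))"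
      using M by (simp add: mtrace_comm_dim[of "lin n d"] prodL_snoc)
    finally show ?thesis unfolding sh .
  qed
  show ?case apply (simp only: s1 s2 length_Cons sum.lessThan_Suc_shift)
    by (simp add: algebra_simps sum_negf del: sum.lessThan_Suc)
qed

definition gram :: "nat \<Rightarrow> (nat \<Rightarrow> real) list \<Rightarrow> (nat \<Rightarrow> real) list \<Rightarrow> real mat" where
  "gram n es ds = mat (length es) (length ds) (\<lambda>(i,j). ip n (es ! i) (ds ! j))"

lemma gram_delete: "j < length ds \<Longrightarrow> mat_delete (gram n (e # es) ds) 0 j = gram n es (delj j ds)"
  by (rule eq_matI) (auto simp: mat_delete_def gram_def nth_delj)

lemma ip_sym: "ip n x y = ip n y x" unfolding ip_def by (simp add: mult.commute)

lemma laplace_trace: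
  "\<And>ds. length ds = length es \<Longrightarrow> sorted_wrt (\<lambda>x y. ip n x y = 0) es \<Longrightarrow>
    mtrace (prodL n es * prodL n (rev ds)) = 2^n * complex_of_real (det (gram n es ds))"
proof (induction es)
  case Nil
  then have "gram n [] ds = 1\<^sub>m 0" by (auto simp: gram_def)
  then show ?case using Nil by (simp add: mtrace_one)
next
  case (Cons e es ds)
  let ?P = "prodL n es"
  let ?Q = "prodL n (rev ds)"
  let ?L = "mtrace (prodL n (e # es) * ?Q)"
  have orth: "\<forall>y\<in>set es. ip n e y = 0" and so: "sorted_wrt (\<lambda>x y. ip n x y = 0) es" using Cons.prems by auto
  have len: "length ds = Suc (length es)" using Cons.prems by simp
  have "?L = mtrace (lin n e * (?P * ?Q))" by simp
  also have "\<dots> = mtrace (?P * (?Q * lin n e))"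
    by (simp add: mtrace_comm_dim[of "lin n e"])
  also have "\<dots> = (-1) ^ length ds * mtrace (?P * (lin n e * ?Q)) +
     (\<Sum>j<length ds. (-1) ^ j * complex_of_real (2 * ip n (ds ! j) e) * mtrace (?P * prodL n (rev (delj j ds))))"
    by (rule trace_move) simp
  also have "mtrace (?P * (lin n e * ?Q)) = (-1) ^ length es * ?L"
  proof -
    have "?P * lin n e = (-1) ^ length es \<cdot>\<^sub>m (lin n e * ?P)"
      using lin_prodL_orth[OF orth] by (simp flip: power_add)
    then show ?thesis
      by (simp add: assoc_dim[symmetric, of ?P "lin n e" ?Q] mtrace_smult_dim del: assoc_dim)
  qed
  also have "(\<Sum>j<length ds. (-1) ^ j * complex_of_real (2 * ip n (ds ! j) e) * mtrace (?P * prodL n (rev (delj j ds))))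
     = 2 * 2^n * complex_of_real (det (gram n (e # es) ds))"
  proof -
    have "det (gram n (e # es) ds) = (\<Sum>j<length ds. gram n (e # es) ds $$ (0,j) * cofactor (gram n (e # es) ds) 0 j)"
      by (rule laplace_expansion_row) (auto simp: gram_def len)
    also have "\<dots> = (\<Sum>j<length ds. (-1) ^ j * ip n (ds ! j) e * det (gram n es (delj j ds)))"
      apply (rule sum.cong[OF refl]) apply (subst cofactor_def, subst gram_delete) apply simp
      by (simp add: gram_def ip_sym len)
    finally have "complex_of_real (det (gram n (e # es) ds)) = (\<Sum>j<length ds. (-1) ^ j * complex_of_real (ip n (ds ! j) e) * complex_of_real (det (gram n es (delj j ds))))"
      by simp
    moreover have "\<And>j. j < length ds \<Longrightarrow> mtrace (?P * prodL n (rev (delj j ds))) = 2^n * complex_of_real (det (gram n es (delj j ds)))"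
      using Cons.IH so len by simp
    ultimately show ?thesis by (simp add: sum_distrib_left algebra_simps)
  qed
  finally have "?L = (-1) ^ length ds * ((-1) ^ length es * ?L) + 2 * 2^n * complex_of_real (det (gram n (e # es) ds))" .
  then show ?case using len by simp
qed

lemma sum_shift1: "(\<Sum>\<nu>\<in>{1..N}. f \<nu>) = (\<Sum>m<N. f (Suc m) :: 'a::comm_monoid_add)"
  by (induction N) (auto simp: atLeastAtMostSuc_conv add.commute)

lemma powi_unit: "cnj (\<i> powi a) * \<i> powi a = 1"
  by (metis complex_cnj_power_int mult.assoc power_int_mult_distrib i_squared complex_i_mult_minus complex_cnj_i power_int_minus_one_mult_self)

lemma config_op_Nil[simp]: "config_op n [] = 1\<^sub>m (2^n)" unfolding config_op_def by simp
lemma config_op_Cons[simp]: "config_op n (m # ms) = majorana n m * config_op n ms" unfolding config_op_def by simp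
lemma config_op_carrier[simp]: "config_op n ms \<in> carrier_mat (2^n) (2^n)"
  by (induction ms) auto
lemma config_op_dim[simp]: "dim_row (config_op n ms) = 2^n" "dim_col (config_op n ms) = 2^n"
  using config_op_carrier[of n ms, THEN carrier_matD(1)] config_op_carrier[of n ms, THEN carrier_matD(2)] by auto

lemma dagger_mult_dim: "dim_col A = dim_row B \<Longrightarrow> dagger (A * B) = dagger B * dagger A"
  by (rule dagger_mult[of A "dim_row A" "dim_col A" B "dim_col B"]) auto

lemma config_unit: "\<forall>m\<in>set ms. 1 \<le> m \<and> m \<le> 2*n \<Longrightarrow> dagger (config_op n ms) * config_op n ms = 1\<^sub>m (2^n)"
proof (induction ms)
  case Nil then show ?case by simp
next
  case (Cons m ms)
  have "dagger (config_op n (m # ms)) * config_op n (m # ms) =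
     dagger (config_op n ms) * ((majorana n m * majorana n m) * config_op n ms)"
    by (simp add: dagger_mult_dim majorana_herm)
  also have "\<dots> = 1\<^sub>m (2^n)" using Cons by (simp add: majorana_sq)
  finally show ?case .
qed

definition sg :: "nat list \<Rightarrow> nat \<Rightarrow> real" where
  "sg \<eta> \<mu> = (-1) ^ length \<eta> * (if \<mu> \<in> set \<eta> then -1 else 1)"

lemma smult_uminus_mat'[simp]: "k \<cdot>\<^sub>m (- A) = (- k :: 'a::ring) \<cdot>\<^sub>m A"
  by (rule eq_matI) auto

lemma uminus_smult_mat'[simp]: "- (k \<cdot>\<^sub>m A) = (- k :: 'a::ring) \<cdot>\<^sub>m A"
  by (rule eq_matI) auto

lemma config_sign:
  assumes "distinct \<eta>" "\<forall>m\<in>set \<eta>. 1 \<le> m \<and> m \<le> 2*n" "1 \<le> \<mu>" "\<mu> \<le> 2*n"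
  shows "config_op n \<eta> * majorana n \<mu> = complex_of_real (sg \<eta> \<mu>) \<cdot>\<^sub>m (majorana n \<mu> * config_op n \<eta>)"
  using assms(1,2)
proof (induction \<eta>)
  case Nil then show ?case by (simp add: sg_def)
next
  case (Cons x \<eta>)
  have IH: "config_op n \<eta> * majorana n \<mu> = complex_of_real (sg \<eta> \<mu>) \<cdot>\<^sub>m (majorana n \<mu> * config_op n \<eta>)"
    using Cons by auto
  have "config_op n (x # \<eta>) * majorana n \<mu> = complex_of_real (sg \<eta> \<mu>) \<cdot>\<^sub>m ((majorana n x * majorana n \<mu>) * config_op n \<eta>)"
    using IH by simp
  also have "\<dots> = complex_of_real (sg (x # \<eta>) \<mu>) \<cdot>\<^sub>m (majorana n \<mu> * config_op n (x # \<eta>))"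
  proof (cases "x = \<mu>")
    case True
    then have "\<mu> \<notin> set \<eta>" using Cons.prems by auto
    then show ?thesis using True by (simp add: sg_def)
  next
    case False
    then show ?thesis using Cons.prems assms(3,4)
      by (simp add: majorana_anti[of x n \<mu>] sg_def)
  qed
  finally show ?case .
qed

lemma herm_unit_sq:
  assumes "dagger A = A" "A = k \<cdot>\<^sub>m C" "cnj k * k = 1" "dagger C * C = 1\<^sub>m N" "C \<in> carrier_mat N N"
  shows "A * A = 1\<^sub>m N"
proof -
  have "A * A = dagger A * A" using assms(1) by simp
  also have "\<dots> = (cnj k * k) \<cdot>\<^sub>m (dagger C * C)" using assms(2,5) by (simp add: mult.commute)
  finally show ?thesis using assms(3,4) by simp
qed

lemma lin_conj:
  assumes "A \<in> carrier_mat (2^n) (2^n)"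
    "\<And>\<nu>. 1 \<le> \<nu> \<Longrightarrow> \<nu> \<le> 2*n \<Longrightarrow> A * majorana n \<nu> * A = complex_of_real (g \<nu>) \<cdot>\<^sub>m majorana n \<nu>"
  shows "A * lin n x * A = lin n (\<lambda>\<nu>. g \<nu> * x \<nu>)"
proof -
  have "A * lin n x * A = linF n (\<lambda>\<nu>. A * majorana n \<nu> * A) (\<lambda>\<nu>. complex_of_real (x \<nu>))"
    unfolding lin_linF using assms(1)
    by (simp add: linF_mult_left linF_mult_right del: assoc_dim)
  also have "\<dots> = lin n (\<lambda>\<nu>. g \<nu> * x \<nu>)"
  proof (rule eq_matI)
    fix r s assume "r < dim_row (lin n (\<lambda>\<nu>. g \<nu> * x \<nu>))" "s < dim_col (lin n (\<lambda>\<nu>. g \<nu> * x \<nu>))"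
    then have rs: "r < 2^n" "s < 2^n" by auto
    show "linF n (\<lambda>\<nu>. A * majorana n \<nu> * A) (\<lambda>\<nu>. complex_of_real (x \<nu>)) $$ (r, s) = lin n (\<lambda>\<nu>. g \<nu> * x \<nu>) $$ (r, s)"
      using rs assms(2) unfolding linF_def lin_def by (auto intro!: sum.cong)
  qed (auto simp: linF_def)
  finally show ?thesis .
qed

lemma prodL_conj:
  assumes "A \<in> carrier_mat (2^n) (2^n)" "A * A = 1\<^sub>m (2^n)" "\<And>x. x \<in> set xs \<Longrightarrow> A * lin n x * A = lin n (f x)"
  shows "A * prodL n xs * A = prodL n (map f xs)"
  using assms(3)
proof (induction xs)
  case Nil then show ?case using assms(1,2) by simp
next
  case (Cons x xs)
  have AA: "\<And>X. dim_row X = 2^n \<Longrightarrow> A * (A * X) = X"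
    using assms(1,2) by (metis assoc_dim carrier_matD left_mult_one_mat')
  have "A * prodL n (x # xs) * A = (A * lin n x * A) * (A * prodL n xs * A)"
    using assms(1) AA by simp
  then show ?case using Cons by simp
qed

lemma prodL_dagger: "dagger (prodL n xs) = prodL n (rev xs)"
  by (induction xs) (auto simp: dagger_mult_dim lin_herm prodL_snoc)

lemma U_config:
  assumes "unitary_op n U" "\<forall>m\<in>set ms. dagger U * majorana n m * U = lin n (f m)"
  shows "dagger U * config_op n ms * U = prodL n (map f ms)"
  using assms(2)
proof (induction ms)
  case Nil then show ?case using assms(1) unfolding unitary_op_def by auto
next
  case (Cons m ms)
  have U: "U \<in> carrier_mat (2^n) (2^n)" "U * dagger U = 1\<^sub>m (2^n)" using assms(1) unfolding unitary_op_def by auto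
  have UU: "\<And>X. dim_row X = 2^n \<Longrightarrow> U * (dagger U * X) = X"
    using U by (metis assoc_dim carrier_matD dagger_dim left_mult_one_mat')
  have "dagger U * config_op n (m # ms) * U = (dagger U * majorana n m * U) * (dagger U * config_op n ms * U)"
    using U UU by simp
  then show ?case using Cons by simp
qed

lemma sorted_less_distinct: "sorted_wrt (<) (xs::nat list) \<Longrightarrow> distinct xs"
  by (induction xs) auto

lemma sg_sq: "sg \<eta> \<nu> * sg \<eta> \<nu> = 1"
  unfolding sg_def by (simp add: power_mult_distrib[symmetric] flip: power_add mult_2)

lemma mult_diag:
  fixes R :: "real mat"
  assumes "D \<in> carrier_mat k k" "\<And>m m'. m < k \<Longrightarrow> m' < k \<Longrightarrow> D $$ (m,m') = (if m = m' then \<delta> m else 0)"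
    "R \<in> carrier_mat p k"
  shows "R * D = mat p k (\<lambda>(i,m). R $$ (i,m) * \<delta> m)"
proof (rule eq_matI)
  fix i m assume im: "i < dim_row (mat p k (\<lambda>(i,m). R $$ (i,m) * \<delta> m))" "m < dim_col (mat p k (\<lambda>(i,m). R $$ (i,m) * \<delta> m))"
  then have "i < p" "m < k" by auto
  then have "(R * D) $$ (i,m) = (\<Sum>m'\<in>{0..<k}. R $$ (i,m') * D $$ (m',m))"
    using assms by (auto simp: scalar_prod_def)
  also have "\<dots> = (\<Sum>m'\<in>{0..<k}. if m' = m then R $$ (i,m) * \<delta> m else 0)"
    by (rule sum.cong) (use assms \<open>m < k\<close> in auto)
  finally have "(R * D) $$ (i,m) = (\<Sum>m'\<in>{0..<k}. if m' = m then R $$ (i,m) * \<delta> m else 0)" .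
  then show "(R * D) $$ (i,m) = mat p k (\<lambda>(i,m). R $$ (i,m) * \<delta> m) $$ (i,m)"
    using \<open>i < p\<close> \<open>m < k\<close> by simp
qed (use assms in auto)

theorem theorem1:
  fixes n :: nat and U :: "complex mat" and u :: "real mat"
    and \<eta> \<alpha> :: "nat list" and a b :: int
  assumes "n \<ge> 1"
    and "matchgate_with n U u"
    and "majorana_config n \<eta>" and "majorana_config n \<alpha>"
    and "dagger (\<i> powi a \<cdot>\<^sub>m config_op n \<eta>) = \<i> powi a \<cdot>\<^sub>m config_op n \<eta>"
    and "dagger (\<i> powi b \<cdot>\<^sub>m config_op n \<alpha>) = \<i> powi b \<cdot>\<^sub>m config_op n \<alpha>"
  shows "frob_norm_sq (commutator (\<i> powi a \<cdot>\<^sub>m config_op n \<eta>)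
            (dagger U * (\<i> powi b \<cdot>\<^sub>m config_op n \<alpha>) * U)) / 2 ^ (n + 2)
       = complex_of_real ((1 + (-1) ^ (length \<alpha> * length \<eta> + 1) *
            det (rows_sub n u \<alpha> * (1\<^sub>m (2 * n) - 2 \<cdot>\<^sub>m proj_modes n \<eta>)
                 * transpose_mat (rows_sub n u \<alpha>))) / 2)"
proof -
  define A where "A = \<i> powi a \<cdot>\<^sub>m config_op n \<eta>"
  define Bq where "Bq = \<i> powi b \<cdot>\<^sub>m config_op n \<alpha>"
  define d where "d = (\<lambda>m \<nu>. u $$ (m - 1, \<nu> - 1))"
  define ds where "ds = map d \<alpha>"
  define es where "es = map (\<lambda>m \<nu>. sg \<eta> \<nu> * d m \<nu>) \<alpha>"
  define X where "X = prodL n ds"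
  define B' where "B' = dagger U * Bq * U"
  have U: "unitary_op n U" and SO: "SO_mat (2 * n) u"
    and hU: "\<forall>\<mu>\<in>{1..2*n}. dagger U * majorana n \<mu> * U =
        mat (2 ^ n) (2 ^ n) (\<lambda>(r, s). \<Sum>\<nu>\<in>{1..2*n}.
           complex_of_real (u $$ (\<mu> - 1, \<nu> - 1)) * majorana n \<nu> $$ (r, s))"
    using assms(2) unfolding matchgate_with_def by auto
  have Uc: "U \<in> carrier_mat (2^n) (2^n)" "dagger U * U = 1\<^sub>m (2^n)" "U * dagger U = 1\<^sub>m (2^n)"
    using U unfolding unitary_op_def by auto
  then have Ud[simp]: "dim_row U = 2^n" "dim_col U = 2^n" by auto
  have \<eta>r: "\<forall>m\<in>set \<eta>. 1 \<le> m \<and> m \<le> 2*n" and \<eta>s: "sorted_wrt (<) \<eta>"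
    using assms(3) unfolding majorana_config_def by auto
  have \<alpha>r: "\<forall>m\<in>set \<alpha>. 1 \<le> m \<and> m \<le> 2*n" and \<alpha>s: "sorted_wrt (<) \<alpha>"
    using assms(4) unfolding majorana_config_def by auto
  have Ad[simp]: "dim_row A = 2^n" "dim_col A = 2^n" unfolding A_def by auto
  have Bqd[simp]: "dim_row Bq = 2^n" "dim_col Bq = 2^n" unfolding Bq_def by auto
  have AH: "dagger A = A" using assms(5) unfolding A_def .
  have BH: "dagger Bq = Bq" using assms(6) unfolding Bq_def .
  have AA: "A * A = 1\<^sub>m (2^n)"
    by (rule herm_unit_sq[OF AH A_def powi_unit config_unit[OF \<eta>r] config_op_carrier])
  have BB: "Bq * Bq = 1\<^sub>m (2^n)"
    by (rule herm_unit_sq[OF BH Bq_def powi_unit config_unit[OF \<alpha>r] config_op_carrier])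
  have AAX: "\<And>Y. dim_row Y = 2^n \<Longrightarrow> A * (A * Y) = Y"
    using AA by (metis assoc_dim Ad left_mult_one_mat')
  have BBX: "\<And>Y. dim_row Y = 2^n \<Longrightarrow> Bq * (Bq * Y) = Y"
    using BB by (metis assoc_dim Bqd left_mult_one_mat')
  have UUX: "\<And>Y. dim_row Y = 2^n \<Longrightarrow> U * (dagger U * Y) = Y"
    using Uc by (metis assoc_dim Ud dagger_dim left_mult_one_mat')
  have Acm: "\<And>\<mu>. 1 \<le> \<mu> \<Longrightarrow> \<mu> \<le> 2*n \<Longrightarrow> A * majorana n \<mu> * A = complex_of_real (sg \<eta> \<mu>) \<cdot>\<^sub>m majorana n \<mu>"
  proof -
    fix \<mu> assume \<mu>: "1 \<le> \<mu>" "\<mu> \<le> 2*n"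
    have "A * majorana n \<mu> = complex_of_real (sg \<eta> \<mu>) \<cdot>\<^sub>m (majorana n \<mu> * A)"
      unfolding A_def using config_sign[OF sorted_less_distinct[OF \<eta>s] \<eta>r \<mu>] by (simp add: mult.commute)
    then have "A * majorana n \<mu> * A = complex_of_real (sg \<eta> \<mu>) \<cdot>\<^sub>m (majorana n \<mu> * (A * A))" by simp
    then show "A * majorana n \<mu> * A = complex_of_real (sg \<eta> \<mu>) \<cdot>\<^sub>m majorana n \<mu>" using AA by simp
  qed
  have Ac: "A \<in> carrier_mat (2^n) (2^n)" unfolding A_def by simp
  have LC: "\<And>x. A * lin n x * A = lin n (\<lambda>\<nu>. sg \<eta> \<nu> * x \<nu>)"
    by (rule lin_conj[OF Ac Acm])
  have AXA: "A * X * A = prodL n es"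
    unfolding X_def ds_def es_def
    by (subst prodL_conj[where f = "\<lambda>x \<nu>. sg \<eta> \<nu> * x \<nu>", OF Ac AA LC]) (auto simp: o_def)
  have hU': "\<forall>m\<in>set \<alpha>. dagger U * majorana n m * U = lin n (d m)"
    using hU \<alpha>r unfolding lin_def d_def by auto
  have XU: "dagger U * config_op n \<alpha> * U = X"
    unfolding X_def ds_def by (rule U_config[OF U hU'])
  have B'X: "B' = \<i> powi b \<cdot>\<^sub>m X"
    unfolding B'_def Bq_def XU[symmetric] by simp
  have B'd[simp]: "dim_row B' = 2^n" "dim_col B' = 2^n" unfolding B'X X_def by auto
  have B'H: "dagger B' = B'"
    unfolding B'_def by (simp add: dagger_mult_dim BH)
  have B'B': "B' * B' = 1\<^sub>m (2^n)"
    unfolding B'_def using Uc by (simp add: UUX BBX)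
  have Xdag: "dagger X = prodL n (rev ds)" unfolding X_def by (rule prodL_dagger)
  have key: "\<i> powi b \<cdot>\<^sub>m B' = dagger X"
  proof -
    have "cnj (\<i> powi b) \<cdot>\<^sub>m dagger X = \<i> powi b \<cdot>\<^sub>m X" using B'H unfolding B'X by simp
    then have "\<i> powi b \<cdot>\<^sub>m (cnj (\<i> powi b) \<cdot>\<^sub>m dagger X) = \<i> powi b \<cdot>\<^sub>m B'" unfolding B'X by simp
    then show ?thesis using powi_unit[of b] by (simp add: mult.commute)
  qed
  have T: "mtrace (A * (B' * (A * B'))) = mtrace (prodL n es * prodL n (rev ds))"
  proof -
    have "A * B' * A = \<i> powi b \<cdot>\<^sub>m (A * X * A)" unfolding B'X X_def by simp
    then have "A * (B' * (A * B')) = (A * X * A) * (\<i> powi b \<cdot>\<^sub>m B')"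
      by (metis Ad B'd assoc_dim dim_row_mat(1) index_smult_mat(2) smult_mult_dim mult_smult_dim index_mult_mat(2) index_mult_mat(3))
    then show ?thesis unfolding AXA key Xdag by simp
  qed
  have uut: "u * transpose_mat u = 1\<^sub>m (2*n)" and uc: "u \<in> carrier_mat (2*n) (2*n)"
    using SO unfolding SO_mat_def by auto
  have ipd: "\<And>p q. 1 \<le> p \<Longrightarrow> p \<le> 2*n \<Longrightarrow> 1 \<le> q \<Longrightarrow> q \<le> 2*n \<Longrightarrow> p \<noteq> q \<Longrightarrow>
      ip n (\<lambda>\<nu>. sg \<eta> \<nu> * d p \<nu>) (\<lambda>\<nu>. sg \<eta> \<nu> * d q \<nu>) = 0"
  proof -
    fix p q :: nat assume pq: "1 \<le> p" "p \<le> 2*n" "1 \<le> q" "q \<le> 2*n" "p \<noteq> q"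
    have "ip n (\<lambda>\<nu>. sg \<eta> \<nu> * d p \<nu>) (\<lambda>\<nu>. sg \<eta> \<nu> * d q \<nu>) = (\<Sum>\<nu>\<in>{1..2*n}. d p \<nu> * d q \<nu>)"
      unfolding ip_def by (rule sum.cong[OF refl]) (metis (no_types, lifting) mult.assoc mult.left_commute mult_1 sg_sq)
    also have "\<dots> = (\<Sum>m<2*n. u $$ (p - 1, m) * u $$ (q - 1, m))"
      unfolding sum_shift1 d_def by simp
    also have "\<dots> = (u * transpose_mat u) $$ (p - 1, q - 1)"
      using uc pq by (simp add: scalar_prod_def atLeast0LessThan)
    also have "\<dots> = 0" using uut pq by simp
    finally show "ip n (\<lambda>\<nu>. sg \<eta> \<nu> * d p \<nu>) (\<lambda>\<nu>. sg \<eta> \<nu> * d q \<nu>) = 0" .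
  qed
  have orth: "sorted_wrt (\<lambda>x y. ip n x y = 0) es"
    unfolding es_def sorted_wrt_map
    by (rule sorted_wrt_mono_rel[OF _ \<alpha>s]) (use ipd \<alpha>r in auto)
  have lap: "mtrace (prodL n es * prodL n (rev ds)) = 2^n * complex_of_real (det (gram n es ds))"
    by (rule laplace_trace[OF _ orth]) (simp add: es_def ds_def)
  define R where "R = rows_sub n u \<alpha>"
  define Dm where "Dm = (1\<^sub>m (2 * n) - 2 \<cdot>\<^sub>m proj_modes n \<eta> :: real mat)"
  define M where "M = R * Dm * transpose_mat R"
  have Rc: "R \<in> carrier_mat (length \<alpha>) (2*n)" unfolding R_def rows_sub_def by simp
  have RD: "R * Dm = mat (length \<alpha>) (2*n) (\<lambda>(i,m). R $$ (i,m) * (if Suc m \<in> set \<eta> then -1 else 1))"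
    by (rule mult_diag[OF _ _ Rc]) (auto simp: Dm_def proj_modes_def)
  have gramM: "gram n es ds = ((-1) ^ length \<eta>) \<cdot>\<^sub>m M"
  proof (rule eq_matI)
    fix i j assume "i < dim_row (((-1) ^ length \<eta>) \<cdot>\<^sub>m M)" "j < dim_col (((-1) ^ length \<eta>) \<cdot>\<^sub>m M)"
    then have ij: "i < length \<alpha>" "j < length \<alpha>" unfolding M_def using Rc by auto
    have "gram n es ds $$ (i,j) = (\<Sum>\<nu>\<in>{1..2*n}. sg \<eta> \<nu> * d (\<alpha>!i) \<nu> * d (\<alpha>!j) \<nu>)"
      using ij unfolding gram_def es_def ds_def ip_def by simp
    also have "\<dots> = (\<Sum>m<2*n. sg \<eta> (Suc m) * u $$ (\<alpha>!i - 1, m) * u $$ (\<alpha>!j - 1, m))"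
      unfolding sum_shift1 d_def by simp
    also have "\<dots> = ((-1) ^ length \<eta>) * M $$ (i,j)"
      using ij Rc unfolding M_def RD
      by (auto simp: scalar_prod_def atLeast0LessThan sum_distrib_left R_def rows_sub_def sg_def
          intro!: sum.cong)
    finally show "gram n es ds $$ (i,j) = (((-1) ^ length \<eta>) \<cdot>\<^sub>m M) $$ (i,j)"
      using ij Rc unfolding M_def by simp
  qed (auto simp: gram_def es_def ds_def M_def R_def rows_sub_def)
  have detg: "det (gram n es ds) = (-1) ^ (length \<alpha> * length \<eta>) * det M"
    unfolding gramM using Rc by (simp add: M_def power_mult mult.commute[of "length \<alpha>"])
  have B'B'X: "\<And>Y. dim_row Y = 2^n \<Longrightarrow> B' * (B' * Y) = Y"
    using B'B' by (metis assoc_dim B'd left_mult_one_mat')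
  have dK: "dagger (A * B' - B' * A) = B' * A - A * B'"
  proof -
    have c1: "A * B' \<in> carrier_mat (2^n) (2^n)" "B' * A \<in> carrier_mat (2^n) (2^n)"
      unfolding carrier_mat_def by simp_all
    show ?thesis unfolding dagger_minus[OF c1] dagger_mult_dim[of A B', simplified] dagger_mult_dim[of B' A, simplified] AH B'H ..
  qed
  have fr: "frob_norm_sq (commutator A B') = 2 * 2^n - 2 * mtrace (A * (B' * (A * B')))"
  proof -
    have "frob_norm_sq (commutator A B') = mtrace ((B' * A - A * B') * (A * B' - B' * A))"
      unfolding frob_norm_sq_def commutator_def dK ..
    also have "\<dots> = mtrace ((B' * (A * (A * B')) - A * (B' * (A * B'))) - (B' * (A * (B' * A)) - A * (B' * (B' * A))))"
      by (simp add: minus_mult_dim mult_minus_dim)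
    also have "\<dots> = mtrace (B' * (A * (A * B'))) - mtrace (A * (B' * (A * B'))) - (mtrace (B' * (A * (B' * A))) - mtrace (A * (B' * (B' * A))))"
      by (simp add: mtrace_minus_dim)
    also have "mtrace (B' * (A * (B' * A))) = mtrace (A * (B' * (A * B')))"
      using mtrace_comm_dim[of B' "A * (B' * A)"] by simp
    finally show ?thesis by (simp add: AAX B'B'X AA B'B' mtrace_one)
  qed
  have fin: "frob_norm_sq (commutator A B') = 2 * 2^n - 2 * 2^n * complex_of_real ((-1) ^ (length \<alpha> * length \<eta>) * det M)"
    unfolding fr T lap detg by simp
  have ar: "\<And>z::complex. (2 * 2^n - 2 * 2^n * z) / 2 ^ (n + 2) = (1 - z) / 2"
    by (simp add: power_add field_simps)
  show ?thesis
    unfolding A_def[symmetric] Bq_def[symmetric] B'_def[symmetric] fin M_def[symmetric] R_def[symmetric] Dm_def[symmetric] ar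
    by simp
qed

end
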